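(* In the setting below, suppose the persistent excitation assumption and the inexact disturbance bound assumption hold, and let $\Theta_t$ be the fixed-complexity parameter set with periodic update. Then for every $\epsilon>0$, every $\theta\in\Theta_0$ such that $[M_\Theta]_i(\theta-\theta^\ast)\ge\epsilon+\rho N_u\tau/\beta$ for some $i\in\{1,\dots,r\}$, and every $t\in\mathbb{N}_{\ge0}$, $$\Pr\{\theta\in\Theta_t\}\ \le\ \Bigl\{1-\Bigl[p_w\Bigl(\frac{\epsilon\beta}{N_u\tau}\Bigr)\Bigr]^{N_u}\Bigr\}^{\lfloor t/N_u\rfloor}.$$
   Context: Setting: $\theta^\ast\in\mathbb{R}^p$ is a fixed (unknown) parameter vector. $\mathcal{W}=\{w\in\mathbb{R}^{n_x}:\Pi_w w\le\pi_w\}$ is a compact convex polytope with $\pi_w>0$. The disturbances $w_0,w_1,\dots$ are independent random vectors in $\mathbb{R}^{n_x}$. $D_0,D_1,\dots\in\mathbb{R}^{n_x\times p}$ is a given (non-random) sequence of regressor matrices. For $t\ge1$ the (random) unfalsified parameter set is $\Delta_t=\{\theta\in\mathbb{R}^p: D_{t-1}(\theta^\ast-\theta)+w_{t-1}\in\mathcal{W}\}$. $\|\cdot\|$ is the Euclidean norm (induced 2-norm for matrices); $\mathcal{B}=\{x\in\mathbb{R}^{n_x}:\|x\|\le1\}$; $\oplus$ is Minkowski sum; $[M]_i$ is the $i$th row of $M$. Persistent excitation assumption: there exist $\tau>0$, $\beta>0$ and an integer $N_u\ge\lceil p/n_x\rceil$ such that for every $t\ge0$, $\|D_t\|\le\tau$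 and $\sum_{j=t}^{t+N_u-1}D_j^\top D_j\succeq\beta I$. Inexact disturbance bound assumption: there exist a compact set $\Omega\subset\mathbb{R}^{n_x}$ and $\rho>0$ with $\Omega\subseteq\mathcal{W}\subseteq\Omega\oplus\rho\mathcal{B}$, such that $w_t\in\Omega$ for all $t$, and a function $p_w:(0,\infty)\to(0,1]$ such that for all $w^0\in\partial\Omega$ (boundary of $\Omega$), all $\epsilon>0$ and all $t\ge0$, $\Pr\{\|w_t-w^0\|<\epsilon\}\ge p_w(\epsilon)$. Fixed-complexity parameter set with periodic update: $M_\Theta\in\mathbb{R}^{r\times p}$ has rows of unit Euclidean norm and is such that $\Theta(\mu):=\{\theta:M_\Theta\theta\le\mu\}$ is bounded for every $\mu\in\mathbb{R}^r$; $\Theta_0=\Theta(\mu_0)$ contains $\theta^\ast$. For $t\ge1$: if $t=kN_u$ for some integer $k\ge1$, then $\Theta_t=\Theta(\mu_t)$ with $[\mu_t]_i=\max\{[M_\Theta]_i\theta:\theta\in\Theta_{t-N_u}\cap\bigcap_{j=t-N_u+1}^t\Delta_j\}$ for $i=1,\dots,r$; otherwise $\Theta_t=\Theta_{t-1}$. *)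

theory Defs
  imports "HOL-Analysis.Analysis" "HOL-Probability.Probability"
begin

definition polyW :: "real^'n^'m \<Rightarrow> real^'m \<Rightarrow> (real^'n) set" where
  "polyW Piw piw = {w. \<forall>i. (Piw *v w) $ i \<le> piw $ i}"

definition ThetaP :: "real^'p^'r \<Rightarrow> real^'r \<Rightarrow> (real^'p) set" where
  "ThetaP MT mu = {\<theta>. \<forall>i. (MT *v \<theta>) $ i \<le> mu $ i}"

text \<open>Unfalsified set Delta_j (for j >= 1) for a realisation ws of the disturbance sequence.\<close>
definition unfalsified ::
  "(nat \<Rightarrow> real^'p^'n) \<Rightarrow> real^'p \<Rightarrow> (real^'n) set \<Rightarrow> (nat \<Rightarrow> real^'n) \<Rightarrow> nat \<Rightarrow> (real^'p) set" where
  "unfalsified D \<theta>s W ws j = {\<theta>. D (j - 1) *v (\<theta>s - \<theta>) + ws (j - 1) \<in> W}"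

text \<open>mu at the update times k*Nu (k = 0,1,...).\<close>
primrec mu_blk ::
  "real^'p^'r \<Rightarrow> real^'r \<Rightarrow> nat \<Rightarrow> (nat \<Rightarrow> real^'p^'n) \<Rightarrow> real^'p \<Rightarrow> (real^'n) set
     \<Rightarrow> (nat \<Rightarrow> real^'n) \<Rightarrow> nat \<Rightarrow> real^'r" where
  "mu_blk MT mu0 Nu D \<theta>s W ws 0 = mu0"
| "mu_blk MT mu0 Nu D \<theta>s W ws (Suc k) =
     (\<chi> i. Sup ((\<lambda>\<theta>. (MT *v \<theta>) $ i) `
        (ThetaP MT (mu_blk MT mu0 Nu D \<theta>s W ws k) \<inter>
         (\<Inter>j\<in>{k * Nu + 1 .. k * Nu + Nu}. unfalsified D \<theta>s W ws j))))"

text \<open>Theta_t with periodic update: constant between update times, so Theta_t = Theta(mu_{(t div Nu) Nu}).\<close>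
definition ThetaSeq ::
  "real^'p^'r \<Rightarrow> real^'r \<Rightarrow> nat \<Rightarrow> (nat \<Rightarrow> real^'p^'n) \<Rightarrow> real^'p \<Rightarrow> (real^'n) set
     \<Rightarrow> (nat \<Rightarrow> real^'n) \<Rightarrow> nat \<Rightarrow> (real^'p) set" where
  "ThetaSeq MT mu0 Nu D \<theta>s W ws t = ThetaP MT (mu_blk MT mu0 Nu D \<theta>s W ws (t div Nu))"

end

theory Submission
  imports Defs
begin

lemma sum_mvmult: "finite A \<Longrightarrow> (\<Sum>j\<in>A. F j) *v (x::real^'n) = (\<Sum>j\<in>A. F j *v x)"
  by (induction A rule: finite_induct) (auto simp: matrix_vector_mult_add_rdistrib)

lemma frontier_min:
  fixes S :: "(real^'n) set" and c :: "real^'n"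
  assumes "compact S" "S \<noteq> {}" "c \<noteq> 0"
  shows "\<exists>w0\<in>frontier S. \<forall>w\<in>S. c \<bullet> w0 \<le> c \<bullet> w"
proof -
  have "continuous_on S (\<lambda>w. c \<bullet> w)" by (intro continuous_intros)
  then obtain w0 where w0: "w0 \<in> S" "\<forall>w\<in>S. c \<bullet> w0 \<le> c \<bullet> w"
    using continuous_attains_inf[OF assms(1,2)] by blast
  have "w0 \<notin> interior S"
  proof
    assume "w0 \<in> interior S"
    then obtain e where e: "e > 0" "ball w0 e \<subseteq> S" using mem_interior by blast
    define w1 where "w1 = w0 - (e / 2 / norm c) *\<^sub>R c"
    have "dist w0 w1 = e / 2" using assms(3) e(1) by (simp add: w1_def dist_norm)
    then have "w1 \<in> S" using e by auto
    moreover have "c \<bullet> w1 = c \<bullet> w0 - (e/2) * norm c"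
      using assms(3) by (simp add: w1_def inner_diff_right power2_norm_eq_inner[symmetric] power2_eq_square)
    moreover have "(e/2) * norm c > 0" using assms(3) e(1) by simp
    ultimately show False using w0(2) by fastforce
  qed
  moreover have "closure S = S" using assms(1) by (simp add: compact_imp_closed)
  ultimately show ?thesis using w0 unfolding frontier_def by auto
qed

lemma solve_pd:
  fixes G :: "real^'p^'p"
  assumes pd: "\<forall>x. x \<bullet> (G *v x) \<ge> \<beta> * (norm x)\<^sup>2" and b: "\<beta> > 0"
  shows "\<exists>u. G *v u = c \<and> \<beta> * norm u \<le> norm c"
proof -
  have lin: "linear ((*v) G)" by (simp add: matrix_vector_mul_linear)
  have "inj ((*v) G)"
  proof (rule linear_inj_on_iff_eq_0[THEN iffD2])
    show "linear ((*v) G)" by (rule lin)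
    show "subspace UNIV" by simp
    show "\<forall>x\<in>UNIV. G *v x = 0 \<longrightarrow> x = 0"
    proof (intro ballI impI)
      fix x :: "real^'p" assume "G *v x = 0"
      then have "\<beta> * (norm x)\<^sup>2 \<le> 0" using pd by (metis inner_zero_right)
      then show "x = 0" using b by (simp add: mult_le_0_iff)
    qed
  qed
  then have "surj ((*v) G)" using linear_injective_imp_surjective lin by blast
  then obtain u where u: "G *v u = c" by (metis surjE)
  have "\<beta> * (norm u)\<^sup>2 \<le> u \<bullet> c" using pd u by metis
  also have "\<dots> \<le> norm u * norm c" by (rule norm_cauchy_schwarz)
  finally have "\<beta> * norm u \<le> norm c"
    by (cases "u = 0") (auto simp: power2_eq_square)
  then show ?thesis using u by blast
qed

lemma gram_inner:
  fixes D :: "nat \<Rightarrow> real^'p^'n"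
  assumes "finite B"
  shows "((\<Sum>j\<in>B. transpose (D j) ** D j) *v u) \<bullet> x = (\<Sum>j\<in>B. (D j *v u) \<bullet> (D j *v x))"
proof -
  have "((\<Sum>j\<in>B. transpose (D j) ** D j) *v u) = (\<Sum>j\<in>B. (transpose (D j) ** D j) *v u)"
    by (rule sum_mvmult[OF assms])
  then show ?thesis
    by (simp add: inner_sum_left matrix_vector_mul_assoc[symmetric] dot_lmul_matrix)
qed

lemma term_bound:
  fixes v y ws w0 :: "real^'n"
  assumes w0: "\<forall>w\<in>\<Omega>. v \<bullet> w0 \<le> v \<bullet> w"
    and WS: "W \<subseteq> {a + b | a b. a \<in> \<Omega> \<and> b \<in> cball 0 \<rho>}"
    and y: "z + ws \<in> W" and d: "norm (ws - w0) \<le> \<delta>"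
  shows "v \<bullet> z \<ge> - ((\<rho> + \<delta>) * norm v)"
proof -
  obtain a b where ab: "z + ws = a + b" "a \<in> \<Omega>" "norm b \<le> \<rho>" using WS y by auto
  have "v \<bullet> b \<ge> - (norm v * norm b)" using Cauchy_Schwarz_ineq2[of v b] by linarith
  moreover have "norm v * norm b \<le> norm v * \<rho>" using ab(3) by (simp add: mult_left_mono)
  moreover have "v \<bullet> (ws - w0) \<le> norm v * \<delta>"
    using norm_cauchy_schwarz[of v "ws - w0"] d by (meson mult_left_mono norm_ge_zero order_trans)
  moreover have "v \<bullet> z = v \<bullet> a + v \<bullet> b - v \<bullet> ws"
    using arg_cong[OF ab(1), of "\<lambda>q. v \<bullet> q"] by (simp add: inner_add_right)
  moreover have "v \<bullet> w0 \<le> v \<bullet> a" using w0 ab(2) by auto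
  ultimately show ?thesis by (simp add: inner_diff_right algebra_simps)
qed

lemma block_bound:
  fixes D :: "nat \<Rightarrow> real^'p^'n" and u x c :: "real^'p"
  assumes fin: "finite B"
    and G: "(\<Sum>j\<in>B. transpose (D j) ** D j) *v u = c"
    and un: "\<beta> * norm u \<le> 1" and b: "\<beta> > 0"
    and Db: "\<forall>j. onorm (\<lambda>x. D j *v x) \<le> \<tau>"
    and w0: "\<forall>j\<in>B. \<forall>w\<in>\<Omega>. (D j *v u) \<bullet> w0 j \<le> (D j *v u) \<bullet> w"
    and WS: "W \<subseteq> {a + b | a b. a \<in> \<Omega> \<and> b \<in> cball 0 \<rho>}"
    and y: "\<forall>j\<in>B. D j *v x + ws j \<in> W"
    and d: "\<forall>j\<in>B. norm (ws j - w0 j) \<le> \<delta>"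
    and rd: "\<rho> + \<delta> \<ge> 0"
  shows "c \<bullet> x \<ge> - ((\<rho> + \<delta>) * (real (card B) * \<tau> / \<beta>))"
proof -
  have nv: "norm (D j *v u) \<le> \<tau> / \<beta>" for j
  proof -
    have "norm (D j *v u) \<le> onorm (\<lambda>x. D j *v x) * norm u"
      by (rule onorm) simp
    also have "\<dots> \<le> \<tau> * norm u" using Db by (simp add: mult_right_mono)
    also have "\<dots> \<le> \<tau> / \<beta>"
    proof -
      have "norm u \<le> 1 / \<beta>" using un b by (simp add: field_simps)
      moreover have "\<tau> \<ge> 0" using Db onorm_pos_le[of "\<lambda>x. D j *v x"] by (meson matrix_vector_mul_bounded_linear order_trans)
      ultimately show ?thesis by (metis mult_left_mono times_divide_eq_right mult_1_right)
    qed
    finally show ?thesis .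
  qed
  have "c \<bullet> x = (\<Sum>j\<in>B. (D j *v u) \<bullet> (D j *v x))" using gram_inner[OF fin, of D u x] G by simp
  also have "\<dots> \<ge> (\<Sum>j\<in>B. - ((\<rho> + \<delta>) * (\<tau> / \<beta>)))"
  proof (rule sum_mono)
    fix j assume j: "j \<in> B"
    have "(D j *v u) \<bullet> (D j *v x) \<ge> - ((\<rho> + \<delta>) * norm (D j *v u))"
      using term_bound[OF _ WS, of "D j *v u" "w0 j" "D j *v x" "ws j" \<delta>] w0 y d j by blast
    moreover have "(\<rho> + \<delta>) * norm (D j *v u) \<le> (\<rho> + \<delta>) * (\<tau> / \<beta>)"
      using mult_left_mono[OF nv[of j] rd] .
    ultimately show "- ((\<rho> + \<delta>) * (\<tau> / \<beta>)) \<le> (D j *v u) \<bullet> (D j *v x)" by linarith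
  qed
  finally show ?thesis by (simp add: algebra_simps)
qed


lemma mu_step:
  fixes MT :: "real^'p^'r" and D :: "nat \<Rightarrow> real^'p^'n"
  assumes th: "\<theta>s \<in> ThetaP MT (mu_blk MT mu0 Nu D \<theta>s W ws k)" and wsW: "\<forall>j. ws j \<in> W"
  shows "\<theta>s \<in> ThetaP MT (mu_blk MT mu0 Nu D \<theta>s W ws (Suc k))"
    and "ThetaP MT (mu_blk MT mu0 Nu D \<theta>s W ws (Suc k)) \<subseteq> ThetaP MT (mu_blk MT mu0 Nu D \<theta>s W ws k)"
proof -
  define S where "S = ThetaP MT (mu_blk MT mu0 Nu D \<theta>s W ws k) \<inter>
         (\<Inter>j\<in>{k * Nu + 1 .. k * Nu + Nu}. unfalsified D \<theta>s W ws j)"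
  have mS: "mu_blk MT mu0 Nu D \<theta>s W ws (Suc k) $ i = Sup ((\<lambda>\<theta>. (MT *v \<theta>) $ i) ` S)" for i
    by (simp add: S_def)
  have inS: "\<theta>s \<in> S" using th wsW by (auto simp: S_def unfalsified_def)
  have ub: "\<And>\<theta>'. \<theta>' \<in> S \<Longrightarrow> (MT *v \<theta>') $ i \<le> mu_blk MT mu0 Nu D \<theta>s W ws k $ i" for i
    by (auto simp: S_def ThetaP_def)
  have bd: "bdd_above ((\<lambda>\<theta>. (MT *v \<theta>) $ i) ` S)" for i
    using ub by (intro bdd_aboveI[of _ "mu_blk MT mu0 Nu D \<theta>s W ws k $ i"]) auto
  have le: "mu_blk MT mu0 Nu D \<theta>s W ws (Suc k) $ i \<le> mu_blk MT mu0 Nu D \<theta>s W ws k $ i" for i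
    unfolding mS using inS ub by (intro cSup_least) auto
  have ge: "(MT *v \<theta>s) $ i \<le> mu_blk MT mu0 Nu D \<theta>s W ws (Suc k) $ i" for i
    unfolding mS using inS bd by (intro cSup_upper) auto
  show "\<theta>s \<in> ThetaP MT (mu_blk MT mu0 Nu D \<theta>s W ws (Suc k))"
    using ge by (simp add: ThetaP_def)
  show "ThetaP MT (mu_blk MT mu0 Nu D \<theta>s W ws (Suc k)) \<subseteq> ThetaP MT (mu_blk MT mu0 Nu D \<theta>s W ws k)"
    using le unfolding ThetaP_def by (auto intro: order_trans)
qed

lemma mu_props:
  fixes MT :: "real^'p^'r" and D :: "nat \<Rightarrow> real^'p^'n"
  assumes th0: "\<theta>s \<in> ThetaP MT mu0" and wsW: "\<forall>j. ws j \<in> W"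
  shows "\<theta>s \<in> ThetaP MT (mu_blk MT mu0 Nu D \<theta>s W ws k)"
  by (induction k) (use th0 mu_step(1)[OF _ wsW] in auto)

lemma mu_excl:
  fixes MT :: "real^'p^'r" and D :: "nat \<Rightarrow> real^'p^'n"
  assumes th: "\<theta>s \<in> ThetaP MT (mu_blk MT mu0 Nu D \<theta>s W ws k)" and wsW: "\<forall>j. ws j \<in> W"
    and bnd: "\<And>\<theta>'. \<theta>' \<in> ThetaP MT (mu_blk MT mu0 Nu D \<theta>s W ws k) \<Longrightarrow>
          (\<forall>j\<in>{k * Nu + 1 .. k * Nu + Nu}. \<theta>' \<in> unfalsified D \<theta>s W ws j) \<Longrightarrow> (MT *v \<theta>') $ i \<le> B"
    and gt: "(MT *v \<theta>) $ i > B"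
  shows "\<theta> \<notin> ThetaP MT (mu_blk MT mu0 Nu D \<theta>s W ws (Suc k))"
proof -
  define S where "S = ThetaP MT (mu_blk MT mu0 Nu D \<theta>s W ws k) \<inter>
         (\<Inter>j\<in>{k * Nu + 1 .. k * Nu + Nu}. unfalsified D \<theta>s W ws j)"
  have mS: "mu_blk MT mu0 Nu D \<theta>s W ws (Suc k) $ i = Sup ((\<lambda>\<theta>. (MT *v \<theta>) $ i) ` S)"
    by (simp add: S_def)
  have inS: "\<theta>s \<in> S" using th wsW by (auto simp: S_def unfalsified_def)
  have "mu_blk MT mu0 Nu D \<theta>s W ws (Suc k) $ i \<le> B"
    unfolding mS using inS bnd by (intro cSup_least) (auto simp: S_def)
  then show ?thesis using gt by (auto simp: ThetaP_def intro!: exI[of _ i])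
qed
theorem theorem5:
  fixes M :: "'a measure"
    and w :: "nat \<Rightarrow> 'a \<Rightarrow> real^'n"
    and D :: "nat \<Rightarrow> real^'p^'n"
    and \<theta>s :: "real^'p"
    and Piw :: "real^'n^'m" and piw :: "real^'m"
    and MT :: "real^'p^'r" and mu0 :: "real^'r"
    and \<tau> \<beta> \<rho> :: real and Nu :: nat
    and \<Omega> :: "(real^'n) set" and pw :: "real \<Rightarrow> real"
    and \<epsilon> :: real and \<theta> :: "real^'p" and t :: nat
  assumes prob: "prob_space M"
    and indep: "prob_space.indep_vars M (\<lambda>_. borel) w UNIV"
    and W_compact: "compact (polyW Piw piw)"
    and piw_pos: "\<forall>i. piw $ i > 0"
    (* persistent excitation *)
    and tau_pos: "\<tau> > 0" and beta_pos: "\<beta> > 0"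
    and Nu_ge: "int Nu \<ge> \<lceil>real CARD('p) / real CARD('n)\<rceil>"
    and D_bound: "\<forall>t. onorm (\<lambda>x. D t *v x) \<le> \<tau>"
    and PE: "\<forall>t x. x \<bullet> ((\<Sum>j\<in>{t..t + Nu - 1}. transpose (D j) ** D j) *v x) \<ge> \<beta> * (norm x)\<^sup>2"
    (* inexact disturbance bound *)
    and Omega_compact: "compact \<Omega>"
    and rho_pos: "\<rho> > 0"
    and Omega_sub: "\<Omega> \<subseteq> polyW Piw piw"
    and W_sub: "polyW Piw piw \<subseteq> {a + b | a b. a \<in> \<Omega> \<and> b \<in> cball 0 \<rho>}"
    and w_in: "\<forall>t. \<forall>\<omega>\<in>space M. w t \<omega> \<in> \<Omega>"
    and pw_range: "\<forall>e>0. 0 < pw e \<and> pw e \<le> 1"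
    and pw_bound: "\<forall>w0\<in>frontier \<Omega>. \<forall>e>0. \<forall>t.
                     measure M {\<omega>\<in>space M. norm (w t \<omega> - w0) < e} \<ge> pw e"
    (* parameter set *)
    and MT_rows: "\<forall>i. norm (MT $ i) = 1"
    and MT_bounded: "\<forall>mu. bounded (ThetaP MT mu)"
    and theta0: "\<theta>s \<in> ThetaP MT mu0"
    (* the claim's hypotheses *)
    and eps_pos: "\<epsilon> > 0"
    and theta_in: "\<theta> \<in> ThetaP MT mu0"
    and theta_far: "\<exists>i. (MT *v (\<theta> - \<theta>s)) $ i \<ge> \<epsilon> + \<rho> * real Nu * \<tau> / \<beta>"
  shows "measure M {\<omega>\<in>space M. \<theta> \<in> ThetaSeq MT mu0 Nu D \<theta>s (polyW Piw piw) (\<lambda>j. w j \<omega>) t}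
           \<le> (1 - (pw (\<epsilon> * \<beta> / (real Nu * \<tau>))) ^ Nu) ^ (t div Nu)"
proof -
  interpret P: prob_space M by (rule prob)
  define Wp where "Wp = polyW Piw piw"
  define K where "K = t div Nu"
  have "0 < real CARD('p) / real CARD('n)" by simp
  then have "0 < \<lceil>real CARD('p) / real CARD('n)\<rceil>"
    by (meson le_of_int_ceiling less_le_trans of_int_0_less_iff)
  then have Nu1: "Nu \<ge> 1" using Nu_ge by linarith
  obtain i0 where far: "(MT *v (\<theta> - \<theta>s)) $ i0 \<ge> \<epsilon> + \<rho> * real Nu * \<tau> / \<beta>" using theta_far by blast
  define e' where "e' = \<epsilon> * \<beta> / (real Nu * \<tau>)"
  have e'pos: "e' > 0" using eps_pos beta_pos tau_pos Nu1 by (simp add: e'_def)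
  have e'eq: "e' * (real Nu * \<tau> / \<beta>) = \<epsilon>" using beta_pos tau_pos Nu1 by (simp add: e'_def field_simps)
  define bl where "bl = (\<lambda>b::nat. {b * Nu .. b * Nu + Nu - 1})"
  have bl_fin: "finite (bl b)" for b by (simp add: bl_def)
  have bl_card: "card (bl b) = Nu" for b using Nu1 by (simp add: bl_def)
  have bl_ne: "bl b \<noteq> {}" for b using Nu1 by (simp add: bl_def)
  have bl_div: "j \<in> bl b \<Longrightarrow> j div Nu = b" for j b
  proof -
    assume "j \<in> bl b"
    then have "b * Nu \<le> j" "j < b * Nu + Nu" using Nu1 by (auto simp: bl_def)
    then show "j div Nu = b" using Nu1
      by (metis add.commute div_nat_eqI mult.commute mult_Suc_right)
  qed
  have "\<forall>b. \<exists>u. (\<Sum>j\<in>bl b. transpose (D j) ** D j) *v u = MT $ i0 \<and> \<beta> * norm u \<le> norm (MT $ i0)"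
  proof
    fix b
    show "\<exists>u. (\<Sum>j\<in>bl b. transpose (D j) ** D j) *v u = MT $ i0 \<and> \<beta> * norm u \<le> norm (MT $ i0)"
      by (rule solve_pd) (use PE beta_pos in \<open>auto simp: bl_def\<close>)
  qed
  then obtain U where U: "\<And>b. (\<Sum>j\<in>bl b. transpose (D j) ** D j) *v U b = MT $ i0"
      "\<And>b. \<beta> * norm (U b) \<le> 1"
    using MT_rows by metis
  define v where "v = (\<lambda>j. D j *v U (j div Nu))"
  have Om_ne: "\<Omega> \<noteq> {}" using w_in P.not_empty by blast
  have "\<forall>j. \<exists>w0\<in>frontier \<Omega>. \<forall>w\<in>\<Omega>. v j \<bullet> w0 \<le> v j \<bullet> w"
  proof
    fix j
    show "\<exists>w0\<in>frontier \<Omega>. \<forall>w\<in>\<Omega>. v j \<bullet> w0 \<le> v j \<bullet> w"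
    proof (cases "v j = 0")
      case True
      have "(axis undefined 1 :: real^'n) \<noteq> 0" by simp
      then obtain w0 where "w0 \<in> frontier \<Omega>" using frontier_min[OF Omega_compact Om_ne] by blast
      then show ?thesis using True by auto
    next
      case False
      then show ?thesis using frontier_min[OF Omega_compact Om_ne] by blast
    qed
  qed
  then obtain W0 where W0: "\<And>j. W0 j \<in> frontier \<Omega>" "\<And>j w. w \<in> \<Omega> \<Longrightarrow> v j \<bullet> W0 j \<le> v j \<bullet> w"
    by metis
  define E where "E = (\<lambda>j. {\<omega>\<in>space M. norm (w j \<omega> - W0 j) < e'})"
  define A where "A = (\<lambda>b. \<Inter>j\<in>bl b. E j)"
  have PE_ge: "P.prob (E j) \<ge> pw e'" for j
    using pw_bound W0(1) e'pos unfolding E_def by blast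
  have det: "\<theta> \<notin> ThetaP MT (mu_blk MT mu0 Nu D \<theta>s Wp (\<lambda>j. w j \<omega>) (Suc b))"
    if om: "\<omega> \<in> A b" "\<omega> \<in> space M" for \<omega> b
  proof -
    define ws where "ws = (\<lambda>j. w j \<omega>)"
    have wsW: "\<forall>j. ws j \<in> Wp" using w_in Omega_sub om(2) by (auto simp: ws_def Wp_def)
    have thS: "\<theta>s \<in> ThetaP MT (mu_blk MT mu0 Nu D \<theta>s Wp ws b)"
      by (rule mu_props[OF theta0 wsW])
    define \<delta> where "\<delta> = Max ((\<lambda>j. norm (ws j - W0 j)) ` bl b)"
    have dle: "\<forall>j\<in>bl b. norm (ws j - W0 j) \<le> \<delta>" using bl_fin by (auto simp: \<delta>_def)
    have dlt: "\<delta> < e'" using om(1) bl_fin bl_ne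
      by (auto simp: \<delta>_def A_def E_def ws_def)
    have d0: "\<delta> \<ge> 0" using dle bl_ne by (meson all_not_in_conv norm_ge_zero order_trans)
    define q where "q = real Nu * \<tau> / \<beta>"
    have qpos: "q > 0" using Nu1 tau_pos beta_pos by (simp add: q_def)
    have "\<theta> \<notin> ThetaP MT (mu_blk MT mu0 Nu D \<theta>s Wp ws (Suc b))"
    proof (rule mu_excl[OF thS wsW, where i = i0 and B = "(MT *v \<theta>s) $ i0 + (\<rho> + \<delta>) * q"])
      fix \<theta>' assume th': "\<theta>' \<in> ThetaP MT (mu_blk MT mu0 Nu D \<theta>s Wp ws b)"
        and unf: "\<forall>j\<in>{b * Nu + 1..b * Nu + Nu}. \<theta>' \<in> unfalsified D \<theta>s Wp ws j"
      have y: "\<forall>j\<in>bl b. D j *v (\<theta>s - \<theta>') + ws j \<in> Wp"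
      proof
        fix j assume j: "j \<in> bl b"
        then have "Suc j \<in> {b * Nu + 1..b * Nu + Nu}" using Nu1 by (auto simp: bl_def)
        from bspec[OF unf this] show "D j *v (\<theta>s - \<theta>') + ws j \<in> Wp" by (simp add: unfalsified_def)
      qed
      have w0h: "\<forall>j\<in>bl b. \<forall>w\<in>\<Omega>. (D j *v U b) \<bullet> W0 j \<le> (D j *v U b) \<bullet> w"
        using W0(2) bl_div by (auto simp: v_def)
      have "MT $ i0 \<bullet> (\<theta>s - \<theta>') \<ge> - ((\<rho> + \<delta>) * (real (card (bl b)) * \<tau> / \<beta>))"
        by (rule block_bound[OF bl_fin U(1) U(2) beta_pos D_bound w0h W_sub[folded Wp_def] y dle])
          (use rho_pos d0 in auto)
      then have "MT $ i0 \<bullet> (\<theta>s - \<theta>') \<ge> - ((\<rho> + \<delta>) * q)" by (simp add: bl_card q_def)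
      then show "(MT *v \<theta>') $ i0 \<le> (MT *v \<theta>s) $ i0 + (\<rho> + \<delta>) * q"
        by (simp add: matrix_vector_mul_component inner_diff_right)
    next
      have "(\<rho> + \<delta>) * q < (\<rho> + e') * q" using dlt qpos by simp
      also have "\<dots> = \<epsilon> + \<rho> * real Nu * \<tau> / \<beta>" using e'eq by (simp add: q_def algebra_simps add_divide_distrib)
      also have "\<dots> \<le> (MT *v (\<theta> - \<theta>s)) $ i0" by (rule far)
      also have "\<dots> = (MT *v \<theta>) $ i0 - (MT *v \<theta>s) $ i0"
        by (simp add: matrix_vector_mul_component inner_diff_right)
      finally show "(MT *v \<theta>s) $ i0 + (\<rho> + \<delta>) * q < (MT *v \<theta>) $ i0" by simp
    qed
    then show ?thesis by (simp add: ws_def)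
  qed
  have incl: "{\<omega>\<in>space M. \<theta> \<in> ThetaSeq MT mu0 Nu D \<theta>s (polyW Piw piw) (\<lambda>j. w j \<omega>) t}
      \<subseteq> space M \<inter> (\<Inter>b\<in>{..<K}. space M - A b)"
  proof (rule subsetI)
    fix \<omega> assume "\<omega> \<in> {\<omega>\<in>space M. \<theta> \<in> ThetaSeq MT mu0 Nu D \<theta>s (polyW Piw piw) (\<lambda>j. w j \<omega>) t}"
    then have om: "\<omega> \<in> space M"
      and th: "\<theta> \<in> ThetaP MT (mu_blk MT mu0 Nu D \<theta>s Wp (\<lambda>j. w j \<omega>) K)"
      by (simp_all add: ThetaSeq_def K_def Wp_def)
    have wsW: "\<forall>j. w j \<omega> \<in> Wp" using w_in Omega_sub om by (auto simp: Wp_def)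
    have dec: "ThetaP MT (mu_blk MT mu0 Nu D \<theta>s Wp (\<lambda>j. w j \<omega>) (Suc k))
        \<subseteq> ThetaP MT (mu_blk MT mu0 Nu D \<theta>s Wp (\<lambda>j. w j \<omega>) k)" for k
      using mu_step(2)[OF mu_props[OF theta0 wsW] wsW] .
    have nA: "\<omega> \<notin> A b" if b: "b < K" for b
    proof
      assume "\<omega> \<in> A b"
      have "ThetaP MT (mu_blk MT mu0 Nu D \<theta>s Wp (\<lambda>j. w j \<omega>) K)
           \<subseteq> ThetaP MT (mu_blk MT mu0 Nu D \<theta>s Wp (\<lambda>j. w j \<omega>) (Suc b))"
        using decseqD[OF decseq_SucI[where X="\<lambda>k. ThetaP MT (mu_blk MT mu0 Nu D \<theta>s Wp (\<lambda>j. w j \<omega>) k)", OF dec], of "Suc b" K] b by simp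
      then show False using det[OF \<open>\<omega> \<in> A b\<close> om] th by blast
    qed
    show "\<omega> \<in> space M \<inter> (\<Inter>b\<in>{..<K}. space M - A b)"
      using om nA by blast
  qed
  have rv: "w j \<in> borel_measurable M" for j using indep unfolding P.indep_vars_def2 by auto
  have Eeq: "E j = w j -` ball (W0 j) e' \<inter> space M" for j
    by (auto simp: E_def dist_norm norm_minus_commute)
  have Eev: "E j \<in> P.events" for j unfolding Eeq using rv by (simp add: measurable_sets)
  have Esp: "E j \<subseteq> space M" for j by (auto simp: E_def)
  have ind1: "P.indep_sets (\<lambda>j. {E j}) UNIV"
  proof (rule P.indep_sets_mono_sets)
    show "P.indep_sets (\<lambda>i. {w i -` A \<inter> space M | A. A \<in> sets borel}) UNIV"
      using indep unfolding P.indep_vars_def2 by auto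
    fix j show "{E j} \<subseteq> {w j -` A \<inter> space M | A. A \<in> sets borel}"
    proof -
      have "ball (W0 j) e' \<in> sets borel" by simp
      then show ?thesis unfolding Eeq by blast
    qed
  qed
  have Aev: "A b \<in> P.events" for b
    unfolding A_def using Eev bl_fin bl_ne by (intro sets.finite_INT) auto
  have probA: "P.prob (A b) = (\<Prod>j\<in>bl b. P.prob (E j))" for b
    unfolding A_def using bl_fin bl_ne by (intro P.indep_setsD[OF ind1]) auto
  have ind2: "P.indep_sets (\<lambda>b. sigma_sets (space M) (\<Union>j\<in>bl b. {E j})) UNIV"
  proof (rule P.indep_sets_collect_sigma)
    show "P.indep_sets (\<lambda>j. {E j}) (\<Union>b\<in>UNIV. bl b)"
      by (rule P.indep_sets_mono_index[OF _ ind1]) auto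
    show "Int_stable {E i}" for i by (simp add: Int_stable_def)
    show "disjoint_family_on bl UNIV"
      unfolding disjoint_family_on_def by (auto dest: bl_div)
  qed
  have Csig: "space M - A b \<in> sigma_sets (space M) (\<Union>j\<in>bl b. {E j})" for b
  proof (rule sigma_sets.Compl)
    show "A b \<in> sigma_sets (space M) (\<Union>j\<in>bl b. {E j})"
      unfolding A_def using Esp bl_ne by (intro sigma_sets_INTER) auto
  qed
  have prb: "P.prob (space M \<inter> (\<Inter>b\<in>{..<K}. space M - A b)) = (\<Prod>b<K. 1 - (\<Prod>j\<in>bl b. P.prob (E j)))"
  proof (cases "K = 0")
    case True
    then show ?thesis by (simp add: P.prob_space)
  next
    case False
    have "space M \<inter> (\<Inter>b\<in>{..<K}. space M - A b) = (\<Inter>b\<in>{..<K}. space M - A b)"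
      using False by auto
    then have "P.prob (space M \<inter> (\<Inter>b\<in>{..<K}. space M - A b)) = (\<Prod>b<K. P.prob (space M - A b))"
    proof -
      have "P.prob (\<Inter>b\<in>{..<K}. space M - A b) = (\<Prod>b\<in>{..<K}. P.prob (space M - A b))"
        by (rule P.indep_setsD[OF ind2]) (use False Csig in auto)
      then show ?thesis using \<open>space M \<inter> (\<Inter>b\<in>{..<K}. space M - A b) = (\<Inter>b\<in>{..<K}. space M - A b)\<close>
        by simp
    qed
    also have "\<dots> = (\<Prod>b<K. 1 - (\<Prod>j\<in>bl b. P.prob (E j)))"
      using Aev probA by (simp add: P.prob_compl)
    finally show ?thesis .
  qed
  have bnd: "(\<Prod>b<K. 1 - (\<Prod>j\<in>bl b. P.prob (E j))) \<le> (1 - (pw e') ^ Nu) ^ K"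
  proof -
    have "(\<Prod>b<K. 1 - (\<Prod>j\<in>bl b. P.prob (E j))) \<le> (\<Prod>b<K. 1 - (pw e') ^ Nu)"
    proof (rule prod_mono, rule conjI)
      fix b
      show "0 \<le> 1 - (\<Prod>j\<in>bl b. P.prob (E j))" using probA[of b] P.prob_le_1[of "A b"] by simp
      have "(pw e') ^ Nu = (\<Prod>j\<in>bl b. pw e')" by (simp add: bl_card)
      also have "\<dots> \<le> (\<Prod>j\<in>bl b. P.prob (E j))"
        using PE_ge pw_range e'pos by (intro prod_mono) auto
      finally show "1 - (\<Prod>j\<in>bl b. P.prob (E j)) \<le> 1 - (pw e') ^ Nu" by simp
    qed
    then show ?thesis by simp
  qed
  have evC: "space M \<inter> (\<Inter>b\<in>{..<K}. space M - A b) \<in> P.events"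
  proof -
    have "space M \<inter> (\<Inter>b\<in>{..<K}. space M - A b) = space M - (\<Union>b\<in>{..<K}. A b)" by auto
    then show ?thesis using Aev by (simp add: sets.Diff sets.finite_UN)
  qed
  have "measure M {\<omega>\<in>space M. \<theta> \<in> ThetaSeq MT mu0 Nu D \<theta>s (polyW Piw piw) (\<lambda>j. w j \<omega>) t}
     \<le> P.prob (space M \<inter> (\<Inter>b\<in>{..<K}. space M - A b))"
  proof (cases "{\<omega>\<in>space M. \<theta> \<in> ThetaSeq MT mu0 Nu D \<theta>s (polyW Piw piw) (\<lambda>j. w j \<omega>) t} \<in> P.events")
    case True
    then show ?thesis using P.finite_measure_mono[OF incl evC] by simp
  next
    case False
    then show ?thesis by (simp add: measure_notin_sets)
  qed
  then show ?thesis using prb bnd by (simp add: K_def e'_def)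
qed

end
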